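(* For integers $n\ge1$ and $s\ge0$, the number of binary sequences $(b_1,\dots,b_{(s+2)n+1})$ of length $(s+2)n+1$ such that for every $j\ge1$ the $j$th occurrence of the pattern $10$, if it exists, starts at an index $\ge (s+2)j+1$, and such that there are exactly $2n-1$ indices $i$ with $b_i\ne b_{i+1}$, equals \[ \frac{1}{n}\binom{(s+2)n}{2n-1} = 2\binom{(s+2)n-1}{2n-1} - s\binom{(s+2)n-1}{2n-2}. \] Moreover, no such admissible sequence has more than $2n-1$ indices $i$ with $b_i\ne b_{i+1}$.
   Context: Positions are indexed from $1$; an occurrence of $10$ is a pair of consecutive entries $b_i=1,b_{i+1}=0$, and occurrences are ordered by starting index. *)

theory Defs
  imports Complex_Main
begin

text \<open>A binary sequence (b_1,...,b_L) is a list xs of booleans of length L,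
  with b_i = xs ! (i - 1) (True = 1, False = 0), positions indexed from 1.\<close>

definition bit :: "bool list \<Rightarrow> nat \<Rightarrow> bool" where
  "bit xs i = xs ! (i - 1)"

definition occ10 :: "bool list \<Rightarrow> nat list" where
  "occ10 xs = filter (\<lambda>i. bit xs i \<and> \<not> bit xs (i + 1)) [1..<length xs]"

definition admissible :: "nat \<Rightarrow> bool list \<Rightarrow> bool" where
  "admissible s xs \<longleftrightarrow>
     (\<forall>j. 1 \<le> j \<and> j \<le> length (occ10 xs) \<longrightarrow> occ10 xs ! (j - 1) \<ge> (s + 2) * j + 1)"

definition changes :: "bool list \<Rightarrow> nat" where
  "changes xs = card {i. 1 \<le> i \<and> i < length xs \<and> bit xs i \<noteq> bit xs (i + 1)}"

end

theory Submission
  imports Defs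
begin



lemma raney_unique:
  fixes G :: "nat \<Rightarrow> int"
  assumes per: "\<And>t. G (t + n) = G t + 1"
    and r: "r < n" "\<forall>j. 1 \<le> j \<and> j \<le> n \<longrightarrow> G r < G (r + j)"
    and r': "r' < n" "\<forall>j. 1 \<le> j \<and> j \<le> n \<longrightarrow> G r' < G (r' + j)"
  shows "r = r'"
proof (rule ccontr)
  assume ne: "r \<noteq> r'"
  have key: False if ab: "a < b" "b < n" "\<forall>j. 1 \<le> j \<and> j \<le> n \<longrightarrow> G a < G (a + j)"
    "\<forall>j. 1 \<le> j \<and> j \<le> n \<longrightarrow> G b < G (b + j)" for a b
  proof -
    have "1 \<le> b - a \<and> b - a \<le> n" using ab by arith
    hence "G a < G (a + (b - a))" using ab(3) by blast
    hence 1: "G a < G b" using ab(1) by simp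
    have "1 \<le> a + n - b \<and> a + n - b \<le> n" using ab by arith
    hence "G b < G (b + (a + n - b))" using ab(4) by blast
    hence "G b < G (a + n)" using ab by simp
    hence "G b < G a + 1" using per by simp
    thus False using 1 by simp
  qed
  show False
  proof (cases "r < r'")
    case True thus ?thesis using key[of r r'] r r' by blast
  next
    case False hence "r' < r" using ne by simp
    thus ?thesis using key[of r' r] r r' by blast
  qed
qed

lemma raney_exists:
  fixes G :: "nat \<Rightarrow> int"
  assumes per: "\<And>t. G (t + n) = G t + 1" and n: "n \<ge> 1"
  shows "\<exists>r. r < n \<and> (\<forall>j. 1 \<le> j \<and> j \<le> n \<longrightarrow> G r < G (r + j))"
proof -
  define m where "m = Min (G ` {..<n})"
  have fin: "finite (G ` {..<n})" by simp
  have "0 \<in> {..<n}" using n by simp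
  hence ne: "G ` {..<n} \<noteq> {}" by blast
  have mle: "\<And>t. t < n \<Longrightarrow> m \<le> G t" unfolding m_def using fin by simp
  have "m \<in> G ` {..<n}" unfolding m_def using fin ne by (rule Min_in)
  then obtain t0 where t0: "t0 < n" "G t0 = m" by auto
  define S where "S = {t. t < n \<and> G t = m}"
  define r where "r = Max S"
  have finS: "finite S" unfolding S_def by simp
  have "t0 \<in> S" using t0 unfolding S_def by simp
  hence "r \<in> S" unfolding r_def using finS by (metis Max_in empty_iff)
  hence rS: "r < n" "G r = m" unfolding S_def by auto
  have rmax: "\<And>t. t \<in> S \<Longrightarrow> t \<le> r" unfolding r_def using finS by simp
  show ?thesis
  proof (intro exI conjI allI impI)
    show "r < n" by fact
    fix j assume j: "1 \<le> j \<and> j \<le> n"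
    show "G r < G (r + j)"
    proof (cases "r + j < n")
      case True
      have "G (r + j) \<noteq> m"
      proof
        assume "G (r + j) = m"
        hence "r + j \<in> S" using True unfolding S_def by simp
        thus False using rmax j by fastforce
      qed
      thus ?thesis using mle[OF True] rS by simp
    next
      case False
      have eq: "r + j = (r + j - n) + n" using False by simp
      have lt: "r + j - n < n" using j rS by arith
      have "G (r + j) = G (r + j - n) + 1" using per eq by metis
      thus ?thesis using mle[OF lt] rS by simp
    qed
  qed
qed

lemma mod_inj_aux0: "(x::nat) \<le> y \<Longrightarrow> y < M \<Longrightarrow> (x + k) mod M = (y + k) mod M \<Longrightarrow> x = y"
proof -
  assume a: "x \<le> y" "y < M" "(x + k) mod M = (y + k) mod M"
  have "M dvd (y + k) - (x + k)" using a mod_eq_dvd_iff_nat[of "x+k" "y+k" M] by simp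
  hence d: "M dvd y - x" by simp
  have "y - x < M" using a by simp
  hence "y - x = 0" using d by (metis dvd_imp_le not_less neq0_conv)
  thus ?thesis using a by simp
qed
lemma mod_inj_aux: "(x::nat) < M \<Longrightarrow> y < M \<Longrightarrow> (x + k) mod M = (y + k) mod M \<Longrightarrow> x = y"
  by (metis mod_inj_aux0 nle_le)
lemma mod_aux2: "0 < (M::nat) \<Longrightarrow> M - k mod M + k = (k div M + 1) * M"
proof -
  assume M: "0 < M"
  have km: "k mod M < M" using M by simp
  have k1: "k - k mod M = M * (k div M)" by (simp add: minus_mod_eq_mult_div)
  have k2: "k mod M \<le> k" by (rule mod_less_eq_dividend)
  have "M - k mod M + k = M + (k - k mod M)" using km k2 by simp
  thus ?thesis using k1 by (simp add: algebra_simps)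
qed

definition rot :: "nat \<Rightarrow> nat \<Rightarrow> nat set \<Rightarrow> nat set" where
  "rot M k A = {i. i < M \<and> (i + k) mod M \<in> A}"
definition cnt :: "nat \<Rightarrow> nat set \<Rightarrow> nat \<Rightarrow> nat" where
  "cnt M A k = card {i. i < k \<and> i mod M \<in> A}"

lemma rot_rot: "rot M k (rot M l A) = rot M (k + l) A"
  unfolding rot_def by (auto simp: mod_add_left_eq add.assoc)

lemma rot_mult: "A \<subseteq> {..<M} \<Longrightarrow> rot M (c * M) A = A"
  unfolding rot_def by auto

lemma rot_sub: "rot M k A \<subseteq> {..<M}" unfolding rot_def by auto

lemma rot_card_le: "0 < M \<Longrightarrow> card (rot M k A) \<le> card (A \<inter> {..<M})"
proof -
  assume M: "0 < M"
  have inj: "inj_on (\<lambda>i. (i + k) mod M) (rot M k A)"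
  proof (rule inj_onI)
    fix x y assume "x \<in> rot M k A" "y \<in> rot M k A" "(x + k) mod M = (y + k) mod M"
    thus "x = y" unfolding rot_def using mod_inj_aux by blast
  qed
  have "(\<lambda>i. (i + k) mod M) ` rot M k A \<subseteq> A \<inter> {..<M}" unfolding rot_def using M by auto
  thus ?thesis using card_inj_on_le[OF inj] by auto
qed

lemma rot_card: assumes M: "0 < M" and A: "A \<subseteq> {..<M}" shows "card (rot M k A) = card A"
proof -
  have AM: "A \<inter> {..<M} = A" using A by auto
  have 1: "card (rot M k A) \<le> card A" using rot_card_le[OF M, of k A] AM by simp
  have "rot M (M - k mod M) (rot M k A) = rot M (M - k mod M + k) A" by (rule rot_rot)
  also have "M - k mod M + k = (k div M + 1) * M"
    using M by (rule mod_aux2)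
  also have "rot M \<dots> A = A" using rot_mult[OF A] by blast
  finally have "card A = card (rot M (M - k mod M) (rot M k A))" by simp
  also have "\<dots> \<le> card (rot M k A \<inter> {..<M})" by (rule rot_card_le[OF M])
  also have "\<dots> = card (rot M k A)" using rot_sub[of M k A] by (simp add: Int_absorb2)
  finally show ?thesis using 1 by simp
qed

lemma cnt_shift: assumes "m \<le> M" shows "card (rot M k A \<inter> {..<m}) + cnt M A k = cnt M A (k + m)"
proof -
  have e1: "rot M k A \<inter> {..<m} = {i. i < m \<and> (i + k) mod M \<in> A}" using assms unfolding rot_def by auto
  have e2: "{i. i < k + m \<and> i mod M \<in> A} = {i. i < k \<and> i mod M \<in> A} \<union> (\<lambda>i. i + k) ` {i. i < m \<and> (i + k) mod M \<in> A}"
    (is "?L = ?P \<union> ?Q")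
  proof
    show "?L \<subseteq> ?P \<union> ?Q"
    proof
      fix x assume x: "x \<in> ?L"
      show "x \<in> ?P \<union> ?Q"
      proof (cases "x < k")
        case True thus ?thesis using x by auto
      next
        case False
        hence "x = (x - k) + k" by simp
        moreover have "x - k < m \<and> (x - k + k) mod M \<in> A" using x False by auto
        ultimately show ?thesis by blast
      qed
    qed
  qed auto
  have disj: "?P \<inter> ?Q = {}" by auto
  have "cnt M A (k + m) = card ?P + card ?Q" unfolding cnt_def e2
    by (rule card_Un_disjoint) (use disj in auto)
  also have "card ?Q = card {i. i < m \<and> (i + k) mod M \<in> A}" by (rule card_image) (simp add: inj_on_def)
  finally show ?thesis unfolding e1 cnt_def by simp
qed

lemma cnt_period: assumes A: "A \<subseteq> {..<M}" shows "cnt M A (M + k) = card A + cnt M A k"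
proof -
  have e: "{i. i < M + k \<and> i mod M \<in> A} = A \<union> (\<lambda>i. i + M) ` {i. i < k \<and> i mod M \<in> A}" (is "?L = A \<union> ?Q")
  proof
    show "?L \<subseteq> A \<union> ?Q"
    proof
      fix x assume x: "x \<in> ?L"
      show "x \<in> A \<union> ?Q"
      proof (cases "x < M")
        case True thus ?thesis using x by auto
      next
        case False
        hence "x = (x - M) + M" by simp
        moreover have "x - M < k" using x False by auto
        moreover have "(x - M) mod M \<in> A" using x False
          by (simp add: le_mod_geq[symmetric])
        ultimately show ?thesis by blast
      qed
    qed
  next
    show "A \<union> ?Q \<subseteq> ?L" using A by auto
  qed
  have disj: "A \<inter> ?Q = {}" using A by auto
  have fA: "finite A" using A finite_subset by blast
  have "cnt M A (M + k) = card A + card ?Q" unfolding cnt_def e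
    by (rule card_Un_disjoint) (use disj fA in auto)
  also have "card ?Q = cnt M A k" unfolding cnt_def by (rule card_image) (simp add: inj_on_def)
  finally show ?thesis .
qed




definition goodA :: "nat \<Rightarrow> nat \<Rightarrow> nat set \<Rightarrow> bool" where
  "goodA B n A \<longleftrightarrow> A \<subseteq> {..<B*n} \<and> card A = 2*n-1 \<and> (\<forall>j. 1 \<le> j \<and> j \<le> n \<longrightarrow> card (A \<inter> {..<B*j}) < 2*j)"


lemma goodrot:
  assumes B: "B \<ge> 1" and n: "n \<ge> 1" and A: "A \<subseteq> {..<B*n}" "card A = 2*n-1"
  shows "goodA B n (rot (B*n) (B*r) A) \<longleftrightarrow>
     (\<forall>j. 1 \<le> j \<and> j \<le> n \<longrightarrow>
        2 * int r - int (cnt (B*n) A (B*r)) < 2 * int (r + j) - int (cnt (B*n) A (B*(r+j))))"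
proof -
  have M: "0 < B*n" using B n by simp
  have c: "card (rot (B*n) (B*r) A) = 2*n-1" using rot_card[OF M A(1)] A(2) by simp
  have e': "int (card (rot (B*n) (B*r) A \<inter> {..<B*j})) = int (cnt (B*n) A (B*(r+j))) - int (cnt (B*n) A (B*r))"
    if "j \<le> n" for j
  proof -
    have "B*j \<le> B*n" using that by simp
    from cnt_shift[OF this, of "B*r" A] show ?thesis by (simp add: algebra_simps)
  qed
  have step: "(card (rot (B*n) (B*r) A \<inter> {..<B*j}) < 2*j) \<longleftrightarrow>
     (2 * int r - int (cnt (B*n) A (B*r)) < 2 * int (r + j) - int (cnt (B*n) A (B*(r+j))))"
    if "j \<le> n" for j
  proof -
    have "(card (rot (B*n) (B*r) A \<inter> {..<B*j}) < 2*j) \<longleftrightarrow> int (card (rot (B*n) (B*r) A \<inter> {..<B*j})) < 2 * int j" by linarith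
    also have "\<dots> \<longleftrightarrow> (2 * int r - int (cnt (B*n) A (B*r)) < 2 * int (r + j) - int (cnt (B*n) A (B*(r+j))))"
      unfolding e'[OF that] by (simp; linarith)
    finally show ?thesis .
  qed
  have "goodA B n (rot (B*n) (B*r) A) \<longleftrightarrow> (\<forall>j. 1 \<le> j \<and> j \<le> n \<longrightarrow> card (rot (B*n) (B*r) A \<inter> {..<B*j}) < 2*j)"
    unfolding goodA_def using rot_sub c by blast
  thus ?thesis using step by blast
qed

lemma Gper:
  assumes n: "n \<ge> 1" and A: "A \<subseteq> {..<B*n}" "card A = 2*n-1"
  shows "2 * int (t + n) - int (cnt (B*n) A (B*(t+n))) = (2 * int t - int (cnt (B*n) A (B*t))) + 1"
proof -
  have "B*(t+n) = B*n + B*t" by (simp add: algebra_simps)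
  hence "cnt (B*n) A (B*(t+n)) = card A + cnt (B*n) A (B*t)" using cnt_period[OF A(1)] by simp
  thus ?thesis using A(2) n by simp
qed

lemma unique_r:
  assumes B: "B \<ge> 1" and n: "n \<ge> 1" and A: "A \<subseteq> {..<B*n}" "card A = 2*n-1"
  shows "\<exists>!r. r < n \<and> goodA B n (rot (B*n) (B*r) A)"
proof -
  define G where "G t = 2 * int t - int (cnt (B*n) A (B*t))" for t
  have per: "\<And>t. G (t + n) = G t + 1" unfolding G_def using Gper[OF n A] .
  have gr: "\<And>r. goodA B n (rot (B*n) (B*r) A) \<longleftrightarrow> (\<forall>j. 1 \<le> j \<and> j \<le> n \<longrightarrow> G r < G (r + j))"
    unfolding G_def using goodrot[OF B n A] .
  show ?thesis unfolding gr using raney_exists[of G n, OF per n] raney_unique[of G n, OF per] by blast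
qed

lemma rot_M: "A \<subseteq> {..<M} \<Longrightarrow> rot M M A = A"
  unfolding rot_def by auto

lemma rot_inv: "A \<subseteq> {..<M} \<Longrightarrow> k + l = M \<Longrightarrow> rot M k (rot M l A) = A"
  by (simp add: rot_rot rot_M)

lemma goodA_D: "goodA B n A \<Longrightarrow> A \<subseteq> {..<B*n} \<and> card A = 2*n-1"
  unfolding goodA_def by blast

lemma count_good:
  assumes B: "B \<ge> 1" and n: "n \<ge> 1"
  shows "n * card {A. goodA B n A} = (B*n) choose (2*n-1)"
proof -
  define M where "M = B*n"
  have M: "0 < M" using B n unfolding M_def by simp
  define T where "T = {A. A \<subseteq> {..<M} \<and> card A = 2*n-1}"
  have cT: "card T = M choose (2*n-1)" unfolding T_def using n_subsets[of "{..<M}" "2*n-1"] by simp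
  have fT: "finite T" unfolding T_def by (rule finite_subset[of _ "Pow {..<M}"]) auto
  define P where "P r A \<longleftrightarrow> goodA B n (rot M (B*r) A)" for r A
  have one: "card {r. r < n \<and> P r A} = 1" if "A \<in> T" for A
  proof -
    have "\<exists>!r. r < n \<and> P r A" using unique_r[OF B n, of A] that unfolding T_def P_def M_def by blast
    then obtain r0 where "r0 < n \<and> P r0 A" and u: "\<And>r. r < n \<and> P r A \<Longrightarrow> r = r0"
      by blast
    hence "{r. r < n \<and> P r A} = {r0}" by blast
    thus ?thesis by simp
  qed
  have "card T = (\<Sum>A\<in>T. card {r. r < n \<and> P r A})" using one by simp
  also have "\<dots> = (\<Sum>A\<in>T. \<Sum>r<n. if P r A then 1 else 0)"
  proof (rule sum.cong[OF refl])
    fix A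
    have "{r. r < n \<and> P r A} = {r \<in> {..<n}. P r A}" by auto
    thus "card {r. r < n \<and> P r A} = (\<Sum>r<n. if P r A then 1 else 0)"
      by (simp add: sum.inter_filter[symmetric])
  qed
  also have "\<dots> = (\<Sum>r<n. \<Sum>A\<in>T. if P r A then 1 else 0)" by (rule sum.swap)
  also have "\<dots> = (\<Sum>r<n. card {A \<in> T. P r A})"
    by (rule sum.cong[OF refl]) (simp add: sum.inter_filter[OF fT, symmetric])
  also have "\<dots> = (\<Sum>r<n. card {A. goodA B n A})"
  proof (rule sum.cong[OF refl])
    fix r assume r: "r \<in> {..<n}"
    have "B*r \<le> M" unfolding M_def using r by simp
    hence Br: "B*r + (M - B*r) = M" "M - B*r + B*r = M" by auto
    have bij: "bij_betw (rot M (B*r)) {A \<in> T. P r A} {A. goodA B n A}"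
    proof (rule bij_betw_byWitness[where f' = "rot M (M - B*r)"])
      show "\<forall>a\<in>{A \<in> T. P r A}. rot M (M - B * r) (rot M (B * r) a) = a"
      proof
        fix a assume "a \<in> {A \<in> T. P r A}"
        hence "a \<subseteq> {..<M}" unfolding T_def by blast
        thus "rot M (M - B * r) (rot M (B * r) a) = a" using rot_inv Br(2) by blast
      qed
      show "\<forall>a'\<in>{A. goodA B n A}. rot M (B * r) (rot M (M - B * r) a') = a'"
      proof
        fix a assume "a \<in> {A. goodA B n A}"
        hence "a \<subseteq> {..<M}" using goodA_D unfolding M_def by blast
        thus "rot M (B * r) (rot M (M - B * r) a) = a" using rot_inv Br(1) by blast
      qed
      show "rot M (B * r) ` {A \<in> T. P r A} \<subseteq> {A. goodA B n A}"
        unfolding P_def by blast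
      show "rot M (M - B * r) ` {A. goodA B n A} \<subseteq> {A \<in> T. P r A}"
      proof
        fix X assume "X \<in> rot M (M - B * r) ` {A. goodA B n A}"
        then obtain A where A: "goodA B n A" "X = rot M (M - B * r) A" by blast
        have As: "A \<subseteq> {..<M}" "card A = 2*n-1" using goodA_D[OF A(1)] unfolding M_def by auto
        have "card X = 2*n-1" unfolding A(2) using rot_card[OF M As(1)] As(2) by simp
        hence "X \<in> T" unfolding T_def using rot_sub A(2) by blast
        moreover have "rot M (B*r) X = A" unfolding A(2) using rot_inv[OF As(1) Br(1)] .
        ultimately show "X \<in> {A \<in> T. P r A}" unfolding P_def using A(1) by simp
      qed
    qed
    show "card {A \<in> T. P r A} = card {A. goodA B n A}" using bij_betw_same_card[OF bij] .
  qed
  also have "\<dots> = n * card {A. goodA B n A}" by simp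
  finally show ?thesis using cT M_def by simp
qed




definition cntP :: "(nat \<Rightarrow> bool) \<Rightarrow> nat \<Rightarrow> nat" where
  "cntP P p = card {i. 1 \<le> i \<and> i \<le> p \<and> P i}"

lemma cntP_0: "cntP P 0 = 0" unfolding cntP_def by simp

lemma cntP_Suc: "cntP P (Suc p) = cntP P p + (if P (Suc p) then 1 else 0)"
proof (cases "P (Suc p)")
  case True
  have "{i. 1 \<le> i \<and> i \<le> Suc p \<and> P i} = insert (Suc p) {i. 1 \<le> i \<and> i \<le> p \<and> P i}"
    using True by auto
  thus ?thesis unfolding cntP_def using True by simp
next
  case False
  have "{i. 1 \<le> i \<and> i \<le> Suc p \<and> P i} = {i. 1 \<le> i \<and> i \<le> p \<and> P i}"
    using False le_Suc_eq by auto
  thus ?thesis unfolding cntP_def using False by simp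
qed

definition ch :: "bool list \<Rightarrow> nat \<Rightarrow> bool" where "ch xs i = (bit xs i \<noteq> bit xs (i+1))"
definition d10 :: "bool list \<Rightarrow> nat \<Rightarrow> bool" where "d10 xs i = (bit xs i \<and> \<not> bit xs (i+1))"

lemma alt: "bit xs (p+1) = (bit xs 1 \<noteq> odd (cntP (ch xs) p)) \<and>
   cntP (d10 xs) p = (cntP (ch xs) p + (if bit xs 1 then 1 else 0)) div 2"
proof (induction p)
  case 0 thus ?case by (simp add: cntP_0)
next
  case (Suc p)
  have c: "cntP (ch xs) (Suc p) = cntP (ch xs) p + (if ch xs (Suc p) then 1 else 0)" by (rule cntP_Suc)
  have d: "cntP (d10 xs) (Suc p) = cntP (d10 xs) p + (if d10 xs (Suc p) then 1 else 0)" by (rule cntP_Suc)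
  show ?case
    using Suc.IH c d unfolding ch_def d10_def by (cases "bit xs 1"; cases "bit xs (Suc p)"; cases "bit xs (Suc (Suc p))") auto
qed

lemma changes_eq: "changes xs = cntP (ch xs) (length xs - 1)"
proof -
  have "{i. 1 \<le> i \<and> i < length xs \<and> bit xs i \<noteq> bit xs (i + 1)} = {i. 1 \<le> i \<and> i \<le> length xs - 1 \<and> ch xs i}"
    unfolding ch_def by auto
  thus ?thesis unfolding changes_def cntP_def by simp
qed

lemma sorted_nth_le:
  fixes os :: "nat list"
  shows "sorted_wrt (<) os \<Longrightarrow> j < length os \<Longrightarrow> (os ! j \<le> c \<longleftrightarrow> j < length (filter (\<lambda>i. i \<le> c) os))"
proof (induction os arbitrary: j)
  case Nil thus ?case by simp
next
  case (Cons x os)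
  have all: "\<forall>y\<in>set os. x < y" using Cons.prems by simp
  show ?case
  proof (cases "x \<le> c")
    case True
    show ?thesis
    proof (cases j)
      case 0 thus ?thesis using True by simp
    next
      case (Suc j') thus ?thesis using Cons True by simp
    qed
  next
    case False
    have cy: "\<forall>y\<in>set (x # os). c < y"
    proof
      fix y assume "y \<in> set (x # os)"
      hence "y = x \<or> x < y" using all by auto
      thus "c < y" using False by auto
    qed
    have "filter (\<lambda>i. i \<le> c) (x # os) = []" using cy by (auto simp: filter_empty_conv)
    moreover have "\<not> (x # os) ! j \<le> c"
    proof (cases j)
      case 0 thus ?thesis using False by simp
    next
      case (Suc j')
      hence "os ! j' \<in> set os" using Cons.prems by simp
      thus ?thesis using all False Suc by force
    qed
    ultimately show ?thesis by simp
  qed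
qed

lemma adm_iff:
  assumes L: "length xs = (s+2)*n + 1" and n: "n \<ge> 1"
  shows "admissible s xs \<longleftrightarrow> (\<forall>j. 1 \<le> j \<and> j \<le> n \<longrightarrow> cntP (d10 xs) ((s+2)*j) < j)"
proof -
  define os where "os = occ10 xs"
  define N where "N c = length (filter (\<lambda>i. i \<le> c) os)" for c
  have os: "os = filter (d10 xs) [1..<length xs]" unfolding os_def occ10_def d10_def by simp
  have sw: "sorted_wrt (<) os" unfolding os by (simp add: sorted_wrt_filter)
  have dist: "distinct os" unfolding os by simp
  have Nc: "N c = card {i. 1 \<le> i \<and> i < length xs \<and> d10 xs i \<and> i \<le> c}" for c
  proof -
    have "N c = card (set (filter (\<lambda>i. i \<le> c) os))" unfolding N_def using dist by (metis distinct_card distinct_filter)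
    also have "set (filter (\<lambda>i. i \<le> c) os) = {i. 1 \<le> i \<and> i < length xs \<and> d10 xs i \<and> i \<le> c}"
      unfolding os by auto
    finally show ?thesis .
  qed
  have Ncnt: "N c = cntP (d10 xs) c" if "c \<le> (s+2)*n" for c
  proof -
    have "{i. 1 \<le> i \<and> i < length xs \<and> d10 xs i \<and> i \<le> c} = {i. 1 \<le> i \<and> i \<le> c \<and> d10 xs i}"
      using that L by auto
    thus ?thesis unfolding Nc cntP_def by simp
  qed
  have Nle: "N c \<le> length os" for c unfolding N_def by simp
  have Nfull: "N ((s+2)*n) = length os"
  proof -
    have "\<forall>i\<in>set os. i \<le> (s+2)*n" unfolding os using L by auto
    thus ?thesis unfolding N_def by (simp add: filter_id_conv)
  qed
  have adm: "admissible s xs \<longleftrightarrow> (\<forall>j. 1 \<le> j \<and> j \<le> length os \<longrightarrow> N ((s+2)*j) < j)"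
  proof -
    have "\<And>j. 1 \<le> j \<and> j \<le> length os \<Longrightarrow> (os ! (j - 1) \<ge> (s + 2) * j + 1 \<longleftrightarrow> N ((s+2)*j) < j)"
    proof -
      fix j assume j: "1 \<le> j \<and> j \<le> length os"
      have jl: "j - 1 < length os" using j by linarith
      have "os ! (j - 1) \<ge> (s + 2) * j + 1 \<longleftrightarrow> \<not> os ! (j-1) \<le> (s+2)*j" by auto
      also have "\<dots> \<longleftrightarrow> \<not> (j - 1 < N ((s+2)*j))" unfolding N_def using sorted_nth_le[OF sw jl, of "(s+2)*j"] by simp
      also have "\<dots> \<longleftrightarrow> N ((s+2)*j) < j" using j by auto
      finally show "os ! (j - 1) \<ge> (s + 2) * j + 1 \<longleftrightarrow> N ((s+2)*j) < j" .
    qed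
    thus ?thesis unfolding admissible_def os_def[symmetric] by blast
  qed
  show ?thesis
  proof
    assume a: "admissible s xs"
    show "\<forall>j. 1 \<le> j \<and> j \<le> n \<longrightarrow> cntP (d10 xs) ((s+2)*j) < j"
    proof (intro allI impI)
      fix j assume j: "1 \<le> j \<and> j \<le> n"
      have "N ((s+2)*j) < j"
      proof (cases "j \<le> length os")
        case True thus ?thesis using a adm j by blast
      next
        case False thus ?thesis using Nle[of "(s+2)*j"] by simp
      qed
      moreover have "(s+2)*j \<le> (s+2)*n" using j mult_le_mono2 by blast
      ultimately show "cntP (d10 xs) ((s+2)*j) < j" using Ncnt by simp
    qed
  next
    assume a: "\<forall>j. 1 \<le> j \<and> j \<le> n \<longrightarrow> cntP (d10 xs) ((s+2)*j) < j"
    have "\<forall>j. 1 \<le> j \<and> j \<le> length os \<longrightarrow> N ((s+2)*j) < j"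
    proof (intro allI impI)
      fix j assume j: "1 \<le> j \<and> j \<le> length os"
      show "N ((s+2)*j) < j"
      proof (cases "j \<le> n")
        case True
        hence "(s+2)*j \<le> (s+2)*n" using mult_le_mono2 by blast
        thus ?thesis using a j True Ncnt by simp
      next
        case False
        have "N ((s+2)*n) < n" using a n Ncnt[of "(s+2)*n"] by simp
        thus ?thesis using Nfull Nle[of "(s+2)*j"] False by simp
      qed
    qed
    thus "admissible s xs" using adm by blast
  qed
qed




definition fset :: "bool list \<Rightarrow> nat set" where
  "fset xs = {i. i < length xs - 1 \<and> xs ! i \<noteq> xs ! (i+1)}"

lemma cnt_fset: "p \<le> length xs - 1 \<Longrightarrow> cntP (ch xs) p = card (fset xs \<inter> {..<p})"
proof -
  assume p: "p \<le> length xs - 1"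
  have "{i. 1 \<le> i \<and> i \<le> p \<and> ch xs i} = Suc ` (fset xs \<inter> {..<p})"
  proof
    show "{i. 1 \<le> i \<and> i \<le> p \<and> ch xs i} \<subseteq> Suc ` (fset xs \<inter> {..<p})"
    proof
      fix i assume i: "i \<in> {i. 1 \<le> i \<and> i \<le> p \<and> ch xs i}"
      then obtain k where k: "i = Suc k" by (cases i) auto
      have "k \<in> fset xs \<inter> {..<p}" using i p unfolding k fset_def ch_def bit_def by auto
      thus "i \<in> Suc ` (fset xs \<inter> {..<p})" using k by blast
    qed
    show "Suc ` (fset xs \<inter> {..<p}) \<subseteq> {i. 1 \<le> i \<and> i \<le> p \<and> ch xs i}"
      unfolding fset_def ch_def bit_def by auto
  qed
  thus ?thesis unfolding cntP_def by (simp add: card_image)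
qed

lemma fset_sub: "fset xs \<subseteq> {..<length xs - 1}" unfolding fset_def by auto

lemma charS:
  assumes L: "length xs = (s+2)*n + 1" and n: "n \<ge> 1"
  shows "(admissible s xs \<and> changes xs = 2*n-1) \<longleftrightarrow> (\<not> xs ! 0 \<and> goodA (s+2) n (fset xs))"
proof -
  define M where "M = (s+2)*n"
  have LM: "length xs - 1 = M" using L M_def by simp
  define b where "b = (if xs ! 0 then 1 else 0::nat)"
  have b1: "bit xs 1 = xs ! 0" unfolding bit_def by simp
  have jM: "(s+2)*j \<le> M" if "j \<le> n" for j unfolding M_def using that mult_le_mono2 by blast
  have d: "cntP (d10 xs) p = (cntP (ch xs) p + b) div 2" for p using alt[of xs p] b1 unfolding b_def by simp
  have cf: "cntP (ch xs) ((s+2)*j) = card (fset xs \<inter> {..<(s+2)*j})" if "j \<le> n" for j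
    using cnt_fset[of "(s+2)*j" xs] jM[OF that] LM by simp
  have chg: "changes xs = card (fset xs)"
  proof -
    have "changes xs = cntP (ch xs) M" using changes_eq LM by simp
    also have "\<dots> = card (fset xs \<inter> {..<M})" using cnt_fset[of M xs] LM by simp
    also have "fset xs \<inter> {..<M} = fset xs" using fset_sub[of xs] LM by auto
    finally show ?thesis .
  qed
  have adm: "admissible s xs \<longleftrightarrow> (\<forall>j. 1 \<le> j \<and> j \<le> n \<longrightarrow> (card (fset xs \<inter> {..<(s+2)*j}) + b) div 2 < j)"
    using adm_iff[OF L n] d cf by auto
  have Mn: "M = (s+2)*n" by (rule M_def)
  have chgM: "card (fset xs) = card (fset xs \<inter> {..<(s+2)*n})"
  proof -
    have "fset xs \<inter> {..<(s+2)*n} = fset xs" using fset_sub[of xs] LM M_def by auto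
    thus ?thesis by simp
  qed
  show ?thesis
  proof
    assume a: "admissible s xs \<and> changes xs = 2*n-1"
    have "(card (fset xs \<inter> {..<(s+2)*n}) + b) div 2 < n" using a adm n by blast
    hence bn: "(2*n - 1 + b) div 2 < n" using a chg chgM by simp
    have b0: "b = 0"
    proof (rule ccontr)
      assume "b \<noteq> 0" hence "b = 1" unfolding b_def by (simp split: if_splits)
      hence "(2*n - 1 + b) div 2 = n" using n by simp
      thus False using bn by simp
    qed
    hence x0: "\<not> xs ! 0" unfolding b_def by (simp split: if_splits)
    have "goodA (s+2) n (fset xs)"
      unfolding goodA_def
    proof (intro conjI allI impI)
      show "fset xs \<subseteq> {..<(s+2)*n}" using fset_sub[of xs] LM M_def by simp
      show "card (fset xs) = 2*n-1" using a chg by simp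
      fix j assume j: "1 \<le> j \<and> j \<le> n"
      have "(card (fset xs \<inter> {..<(s+2)*j}) + b) div 2 < j" using a adm j by blast
      thus "card (fset xs \<inter> {..<(s+2)*j}) < 2*j" using b0 by simp
    qed
    thus "\<not> xs ! 0 \<and> goodA (s+2) n (fset xs)" using x0 by simp
  next
    assume a: "\<not> xs ! 0 \<and> goodA (s+2) n (fset xs)"
    have b0: "b = 0" using a unfolding b_def by simp
    have "admissible s xs" unfolding adm
    proof (intro allI impI)
      fix j assume j: "1 \<le> j \<and> j \<le> n"
      have "card (fset xs \<inter> {..<(s+2)*j}) < 2*j" using a j unfolding goodA_def by blast
      thus "(card (fset xs \<inter> {..<(s+2)*j}) + b) div 2 < j" using b0 by simp
    qed
    moreover have "changes xs = 2*n-1" using a chg unfolding goodA_def by simp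
    ultimately show "admissible s xs \<and> changes xs = 2*n-1" by simp
  qed
qed

lemma part3:
  assumes L: "length xs = (s+2)*n + 1" and n: "n \<ge> 1" and a: "admissible s xs"
  shows "changes xs \<le> 2*n-1"
proof -
  define M where "M = (s+2)*n"
  have LM: "length xs - 1 = M" using L M_def by simp
  have "cntP (d10 xs) M < n" using adm_iff[OF L n] a n unfolding M_def by blast
  moreover have "cntP (d10 xs) M = (cntP (ch xs) M + (if bit xs 1 then 1 else 0)) div 2" using alt[of xs M] by simp
  moreover have "changes xs = cntP (ch xs) M" using changes_eq LM by simp
  ultimately show ?thesis by (simp split: if_splits; linarith)
qed




lemma nxt: "k < length xs - 1 \<Longrightarrow> xs ! Suc k = (if k \<in> fset xs then \<not> xs ! k else xs ! k)"
  unfolding fset_def by auto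

lemma card_Suc_int: "finite A \<Longrightarrow> card (A \<inter> {..<Suc i}) = card (A \<inter> {..<i}) + (if i \<in> A then 1 else 0)"
proof -
  assume f: "finite A"
  show ?thesis
  proof (cases "i \<in> A")
    case True
    have "A \<inter> {..<Suc i} = insert i (A \<inter> {..<i})" using True by auto
    thus ?thesis using True f by simp
  next
    case False
    have "A \<inter> {..<Suc i} = A \<inter> {..<i}" using False by (auto simp: less_Suc_eq)
    thus ?thesis using False by simp
  qed
qed

lemma card_S:
  assumes n: "n \<ge> 1"
  shows "card {xs. length xs = (s+2)*n+1 \<and> admissible s xs \<and> changes xs = 2*n-1} = card {A. goodA (s+2) n A}"
proof -
  define M where "M = (s+2)*n"
  define S where "S = {xs. length xs = M+1 \<and> \<not> xs ! 0 \<and> goodA (s+2) n (fset xs)}"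
  have SE: "{xs. length xs = (s+2)*n+1 \<and> admissible s xs \<and> changes xs = 2*n-1} = S"
    unfolding S_def
  proof (rule Collect_cong)
    fix xs
    show "(length xs = (s+2)*n+1 \<and> admissible s xs \<and> changes xs = 2*n-1) \<longleftrightarrow>
          (length xs = M+1 \<and> \<not> xs ! 0 \<and> goodA (s+2) n (fset xs))"
    proof (cases "length xs = (s+2)*n+1")
      case True thus ?thesis using charS[OF True n] unfolding M_def by simp
    next
      case False thus ?thesis unfolding M_def by simp
    qed
  qed
  have inj: "inj_on fset S"
  proof (rule inj_onI)
    fix xs ys assume xs: "xs \<in> S" and ys: "ys \<in> S" and e: "fset xs = fset ys"
    have lx: "length xs = M+1" and ly: "length ys = M+1" using xs ys unfolding S_def by auto
    have "\<forall>k. k \<le> M \<longrightarrow> xs ! k = ys ! k"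
    proof (intro allI)
      fix k show "k \<le> M \<longrightarrow> xs ! k = ys ! k"
      proof (induction k)
        case 0 show ?case using xs ys unfolding S_def by simp
      next
        case (Suc k)
        show ?case
        proof
          assume k: "Suc k \<le> M"
          have k1: "k < length xs - 1" "k < length ys - 1" using k lx ly by auto
          have ek: "xs ! k = ys ! k" using Suc.IH k by simp
          have "xs ! Suc k = (if k \<in> fset xs then \<not> xs ! k else xs ! k)" using nxt[OF k1(1)] .
          moreover have "ys ! Suc k = (if k \<in> fset ys then \<not> ys ! k else ys ! k)" using nxt[OF k1(2)] .
          ultimately show "xs ! Suc k = ys ! Suc k" using e ek by simp
        qed
      qed
    qed
    thus "xs = ys" using lx ly by (intro nth_equalityI) auto
  qed
  have img: "fset ` S = {A. goodA (s+2) n A}"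
  proof
    show "fset ` S \<subseteq> {A. goodA (s+2) n A}" unfolding S_def by auto
    show "{A. goodA (s+2) n A} \<subseteq> fset ` S"
    proof
      fix A assume "A \<in> {A. goodA (s+2) n A}"
      hence gA: "goodA (s+2) n A" by simp
      hence As: "A \<subseteq> {..<M}" unfolding goodA_def M_def by blast
      hence fA: "finite A" using finite_subset by blast
      define xs where "xs = map (\<lambda>k. odd (card (A \<inter> {..<k}))) [0..<M+1]"
      have lx: "length xs = M+1" unfolding xs_def by simp
      have xk: "xs ! k = odd (card (A \<inter> {..<k}))" if "k \<le> M" for k
        unfolding xs_def using that by (simp del: upt_Suc add: nth_map_upt)
      have "fset xs = A"
      proof
        show "fset xs \<subseteq> A"
        proof
          fix i assume "i \<in> fset xs"
          hence i: "i < M" "xs ! i \<noteq> xs ! (i+1)" unfolding fset_def using lx by auto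
          show "i \<in> A"
          proof (rule ccontr)
            assume "i \<notin> A"
            hence "card (A \<inter> {..<Suc i}) = card (A \<inter> {..<i})" using card_Suc_int[OF fA, of i] by simp
            moreover have "xs ! i = odd (card (A \<inter> {..<i}))" using xk[of i] i by simp
            moreover have "xs ! (i+1) = odd (card (A \<inter> {..<Suc i}))" using xk[of "Suc i"] i by simp
            ultimately show False using i(2) by simp
          qed
        qed
        show "A \<subseteq> fset xs"
        proof
          fix i assume iA: "i \<in> A"
          hence i: "i < M" using As by auto
          have c: "card (A \<inter> {..<Suc i}) = card (A \<inter> {..<i}) + 1" using card_Suc_int[OF fA, of i] iA by simp
          have "xs ! i = odd (card (A \<inter> {..<i}))" using xk[of i] i by simp
          moreover have "xs ! (i+1) = odd (card (A \<inter> {..<i}) + 1)" using xk[of "Suc i"] i c by simp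
          ultimately have "xs ! i \<noteq> xs ! (i+1)" by simp
          thus "i \<in> fset xs" unfolding fset_def using lx i by simp
        qed
      qed
      moreover have "\<not> xs ! 0" using xk[of 0] by simp
      ultimately have "xs \<in> S" unfolding S_def using lx gA by simp
      thus "A \<in> fset ` S" using \<open>fset xs = A\<close> by blast
    qed
  qed
  show ?thesis unfolding SE using bij_betw_same_card[OF bij_betw_imageI[OF inj img]] .
qed




theorem mainTheorem7:
  fixes n s :: nat
  assumes "n \<ge> 1"
  shows "real (card {xs. length xs = (s + 2) * n + 1 \<and> admissible s xs \<and> changes xs = 2 * n - 1})
           = (1 / real n) * real (((s + 2) * n) choose (2 * n - 1))
       \<and> int (card {xs. length xs = (s + 2) * n + 1 \<and> admissible s xs \<and> changes xs = 2 * n - 1})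
           = 2 * int (((s + 2) * n - 1) choose (2 * n - 1)) - int s * int (((s + 2) * n - 1) choose (2 * n - 2))
       \<and> (\<forall>xs. length xs = (s + 2) * n + 1 \<and> admissible s xs \<longrightarrow> changes xs \<le> 2 * n - 1)"
proof -
  have n: "n \<ge> 1" by fact
  define N where "N = card {xs. length xs = (s + 2) * n + 1 \<and> admissible s xs \<and> changes xs = 2 * n - 1}"
  define M where "M = (s + 2) * n"
  define k where "k = 2 * n - 1"
  define C where "C = M choose k"
  define c1 where "c1 = (M - 1) choose k"
  define c2 where "c2 = (M - 1) choose (2 * n - 2)"
  have B: "s + 2 \<ge> 1" by simp
  have h3: "n * N = C" unfolding N_def C_def M_def k_def using count_good[OF B n] card_S[OF n] by simp
  have p1: "real N = (1 / real n) * real C"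
  proof -
    have "real n * real N = real C" using h3 by (metis of_nat_mult)
    thus ?thesis using n by (simp add: field_simps)
  qed
  have kM: "k \<le> M" unfolding k_def M_def using n by (simp add: algebra_simps)
  have h1: "(M - k) * C = M * c1" unfolding C_def c1_def by (rule binomial_absorb_comp)
  have ks: "Suc (2 * n - 2) = k" unfolding k_def using n by simp
  have h2: "k * C = M * c2" unfolding C_def c2_def using binomial_absorption[of "2*n-2" M] ks by simp
  have e1: "int M * int c1 = (int M - int k) * int C" using h1 kM by (metis of_nat_diff of_nat_mult)
  have e2: "int M * int c2 = int k * int C" using h2 by (metis of_nat_mult)
  have iC: "int C = int n * int N" using h3 by (metis of_nat_mult)
  have iM: "int M = (int s + 2) * int n" unfolding M_def by (simp add: algebra_simps)
  have ik: "int k = 2 * int n - 1" unfolding k_def using n by simp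
  have "int M * (2 * int c1 - int s * int c2) = 2 * (int M * int c1) - int s * (int M * int c2)"
    by (simp add: algebra_simps)
  also have "\<dots> = 2 * ((int M - int k) * int C) - int s * (int k * int C)" unfolding e1 e2 ..
  also have "\<dots> = int M * int N" unfolding iC iM ik by (simp add: algebra_simps)
  finally have "int M * (2 * int c1 - int s * int c2) = int M * int N" .
  moreover have "M \<noteq> 0" unfolding M_def using n by simp
  hence "int M \<noteq> 0" by simp
  ultimately have p2: "int N = 2 * int c1 - int s * int c2" by simp
  have p3: "\<forall>xs. length xs = (s + 2) * n + 1 \<and> admissible s xs \<longrightarrow> changes xs \<le> 2 * n - 1"
    using part3[OF _ n] by blast
  show ?thesis using p1 p2 p3 unfolding N_def C_def c1_def c2_def M_def k_def by simp
qed


end
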